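(* Let $P$ be a finite point set and $C$ a convex body in the plane. Any algorithm that classifies the points of $P$ in relation to $C$ (i.e. decides for each point of $P$ whether it lies in $C$), using only a separation oracle for $C$, must perform at least $\operatorname{price}(P,C)$ separation oracle queries.
   Context: Separation oracle: given a query point $q\in\mathbb{R}^2$, it either reports $q\in C$, or returns a line separating $q$ from $C$. The outer fence $F_{\mathrm{out}}$ of $P$ is a closed convex polygon with the minimum number of vertices such that $C\subseteq F_{\mathrm{out}}$ and $C\cap P=F_{\mathrm{out}}\cap P$. The inner fence $F_{\mathrm{in}}$ is a closed convex polygon with the minimum number of vertices such that $F_{\mathrm{in}}\subseteq C$ and $C\cap P=F_{\mathrm{in}}\cap P$. The separation price is $\operatorname{price}(P,C)=|V(F_{\mathrm{in}})|+|V(F_{\mathrm{out}})|$, where $|V(F)|$ is the number of vertices of a polygon $F$. *)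

theory Defs
  imports "HOL-Analysis.Analysis"
begin

type_synonym pt = "real ^ 2"

definition convex_body :: "pt set \<Rightarrow> bool" where
  "convex_body C \<longleftrightarrow> compact C \<and> convex C \<and> interior C \<noteq> {}"

text \<open>Closed convex polygon: intersection of finitely many closed half-planes
  (library notion polyhedron); its vertices are its extreme points.\<close>
definition vertices :: "pt set \<Rightarrow> pt set" where
  "vertices F = {x. x extreme_point_of F}"

definition outer_fence_size :: "pt set \<Rightarrow> pt set \<Rightarrow> nat" where
  "outer_fence_size P C = (LEAST n. \<exists>F. polyhedron F \<and> C \<subseteq> F \<and> C \<inter> P = F \<inter> P
                                          \<and> card (vertices F) = n)"

definition inner_fence_size :: "pt set \<Rightarrow> pt set \<Rightarrow> nat" where
  "inner_fence_size P C = (LEAST n. \<exists>F. polyhedron F \<and> F \<subseteq> C \<and> C \<inter> P = F \<inter> P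
                                          \<and> card (vertices F) = n)"

definition price :: "pt set \<Rightarrow> pt set \<Rightarrow> nat" where
  "price P C = inner_fence_size P C + outer_fence_size P C"

text \<open>Answer of a separation oracle: the point is inside, or a line
  {x. a \<bullet> x = b} (a \<noteq> 0) with C in {x. a \<bullet> x \<le> b} and a \<bullet> q > b.\<close>
datatype answer = Inside | Separate pt real

definition sep_oracle :: "pt set \<Rightarrow> (pt \<Rightarrow> answer) \<Rightarrow> bool" where
  "sep_oracle C orc \<longleftrightarrow>
     (\<forall>q. (q \<in> C \<longrightarrow> orc q = Inside) \<and>
          (q \<notin> C \<longrightarrow> (\<exists>a b. orc q = Separate a b \<and> a \<noteq> 0 \<and>
                               C \<subseteq> {x. a \<bullet> x \<le> b} \<and> a \<bullet> q > b)))"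

text \<open>A deterministic adaptive algorithm that accesses C only through the oracle:
  a (well-founded) decision tree. Done S outputs the set S of points declared inside.\<close>
datatype alg = Done "pt set" | Ask pt "answer \<Rightarrow> alg"

primrec result :: "(pt \<Rightarrow> answer) \<Rightarrow> alg \<Rightarrow> pt set" where
  "result orc (Done S) = S"
| "result orc (Ask q k) = result orc (k (orc q))"

primrec num_queries :: "(pt \<Rightarrow> answer) \<Rightarrow> alg \<Rightarrow> nat" where
  "num_queries orc (Done S) = 0"
| "num_queries orc (Ask q k) = Suc (num_queries orc (k (orc q)))"

definition classifies :: "pt set \<Rightarrow> alg \<Rightarrow> bool" where
  "classifies P A \<longleftrightarrow>
     (\<forall>C orc. convex_body C \<and> sep_oracle C orc \<longrightarrow> (\<forall>p\<in>P. p \<in> result orc A \<longleftrightarrow> p \<in> C))"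

end

theory Submission
  imports Defs
begin

lemma tight2:
  fixes a :: "'i \<Rightarrow> pt" and b :: "'i \<Rightarrow> real"
  assumes fin: "finite I"
    and v: "v extreme_point_of {x. \<forall>i\<in>I. a i \<bullet> x \<le> b i}"
  shows "2 \<le> card {i\<in>I. a i \<bullet> v = b i}"
proof (rule ccontr)
  define F where "F = {x. \<forall>i\<in>I. a i \<bullet> x \<le> b i}"
  define T where "T = {i\<in>I. a i \<bullet> v = b i}"
  assume "\<not> 2 \<le> card {i\<in>I. a i \<bullet> v = b i}"
  hence cT: "card T \<le> 1" by (simp add: T_def)
  have fT: "finite T" using fin by (simp add: T_def)
  have "dim (a ` T) \<le> card (a ` T)"
    by (rule dim_le_card) (auto intro: span_base simp: fT)
  also have "\<dots> \<le> card T" by (rule card_image_le[OF fT])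
  finally have "dim (a ` T) < DIM(pt)" using cT by simp
  then obtain w where w0: "w \<noteq> 0" and wo: "\<And>y. y \<in> span (a ` T) \<Longrightarrow> orthogonal w y"
    using orthogonal_to_subspace_exists by blast
  have wT: "a i \<bullet> w = 0" if "i \<in> T" for i
    using wo[of "a i"] that span_base[of "a i" "a ` T"]
    by (auto simp: orthogonal_def inner_commute)
  have vF: "v \<in> F" using v by (simp add: F_def extreme_point_of_def)
  have slack: "a i \<bullet> v < b i" if "i \<in> I - T" for i
    using vF that by (force simp: F_def T_def)
  have "\<forall>i\<in>I - T. \<forall>\<^sub>F e in at_right (0::real). e * \<bar>a i \<bullet> w\<bar> < b i - a i \<bullet> v"
  proof
    fix i assume i: "i \<in> I - T"
    have "((\<lambda>e. e * \<bar>a i \<bullet> w\<bar>) \<longlongrightarrow> 0 * \<bar>a i \<bullet> w\<bar>) (at_right (0::real))"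
      by (intro tendsto_intros)
    moreover have "0 * \<bar>a i \<bullet> w\<bar> < b i - a i \<bullet> v" using slack[OF i] by simp
    ultimately show "\<forall>\<^sub>F e in at_right (0::real). e * \<bar>a i \<bullet> w\<bar> < b i - a i \<bullet> v"
      by (rule order_tendstoD)
  qed
  hence "\<forall>\<^sub>F e in at_right (0::real). \<forall>i\<in>I - T. e * \<bar>a i \<bullet> w\<bar> < b i - a i \<bullet> v"
    by (rule eventually_ball_finite[rotated]) (use fin in simp)
  hence ev: "\<forall>\<^sub>F e in at_right (0::real). 0 < e \<and> (\<forall>i\<in>I - T. e * \<bar>a i \<bullet> w\<bar> < b i - a i \<bullet> v)"
    using eventually_at_right_less[of 0] by (auto elim: eventually_elim2)
  then obtain e where e0: "0 < e" and e: "\<And>i. i \<in> I - T \<Longrightarrow> e * \<bar>a i \<bullet> w\<bar> < b i - a i \<bullet> v"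
  proof -
    from eventually_happens[OF ev] obtain e where "0 < e \<and> (\<forall>i\<in>I - T. e * \<bar>a i \<bullet> w\<bar> < b i - a i \<bullet> v)"
      by auto
    thus ?thesis using that by blast
  qed
  have inF: "v + s *\<^sub>R (e *\<^sub>R w) \<in> F" if s: "s = 1 \<or> s = -1" for s
    unfolding F_def
  proof (intro CollectI ballI)
    fix i assume i: "i \<in> I"
    show "a i \<bullet> (v + s *\<^sub>R (e *\<^sub>R w)) \<le> b i"
    proof (cases "i \<in> T")
      case True
      thus ?thesis using vF i wT[OF True] by (auto simp: F_def inner_add_right)
    next
      case False
      have "s * e * (a i \<bullet> w) \<le> e * \<bar>a i \<bullet> w\<bar>" using s e0 by (auto simp: abs_if)
      thus ?thesis using e[of i] i False by (auto simp: inner_add_right)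
    qed
  qed
  have "v = midpoint (v + 1 *\<^sub>R (e *\<^sub>R w)) (v + (-1) *\<^sub>R (e *\<^sub>R w))"
    by (simp add: midpoint_def vec_eq_iff algebra_simps)
  moreover have "v + 1 *\<^sub>R (e *\<^sub>R w) \<noteq> v + (-1) *\<^sub>R (e *\<^sub>R w)"
    using e0 w0 by (simp add: vec_eq_iff)
  ultimately have "v \<in> open_segment (v + 1 *\<^sub>R (e *\<^sub>R w)) (v + (-1) *\<^sub>R (e *\<^sub>R w))"
    by (metis midpoint_in_open_segment)
  thus False using v inF[of 1] inF[of "-1"] unfolding F_def extreme_point_of_def by blast
qed

lemma three_on_line:
  fixes a :: pt
  assumes a0: "a \<noteq> 0"
    and ex: "x extreme_point_of F" "y extreme_point_of F" "z extreme_point_of F"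
    and d: "x \<noteq> y" "y \<noteq> z" "x \<noteq> z"
    and on: "a \<bullet> x = c" "a \<bullet> y = c" "a \<bullet> z = c"
  shows False
proof -
  have "aff_dim {x, y, z} \<le> aff_dim {u. a \<bullet> u = c}"
    by (rule aff_dim_subset) (use on in auto)
  also have "\<dots> = 1" using a0 by simp
  finally have "collinear {x, y, z}" by (simp add: collinear_aff_dim)
  hence "between (y, z) x \<or> between (z, x) y \<or> between (x, y) z"
    by (simp add: collinear_between_cases)
  moreover have "\<not> between (y, z) x"
    using ex d unfolding extreme_point_of_def between_mem_segment open_segment_def by blast
  moreover have "\<not> between (z, x) y"
    using ex d unfolding extreme_point_of_def between_mem_segment open_segment_def by blast
  moreover have "\<not> between (x, y) z"
    using ex d unfolding extreme_point_of_def between_mem_segment open_segment_def by blast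
  ultimately show False by blast
qed

lemma card_le2:
  assumes "finite S" and "\<And>x y z. x \<in> S \<Longrightarrow> y \<in> S \<Longrightarrow> z \<in> S \<Longrightarrow> x \<noteq> y \<Longrightarrow> y \<noteq> z \<Longrightarrow> x \<noteq> z \<Longrightarrow> False"
  shows "card S \<le> 2"
proof (rule ccontr)
  assume "\<not> card S \<le> 2"
  hence "Suc (Suc (Suc 0)) \<le> card S" by simp
  then obtain x y z B where "S = insert x (insert y (insert z B))" "x \<notin> insert y (insert z B)"
    "y \<notin> insert z B" "z \<notin> B"
    by (auto simp: card_le_Suc_iff)
  thus False using assms(2)[of x y z] by auto
qed

lemma vertex_bound:
  fixes a :: "'i \<Rightarrow> pt" and b :: "'i \<Rightarrow> real"
  assumes fin: "finite I" and a0: "\<And>i. i \<in> I \<Longrightarrow> a i \<noteq> 0"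
  shows "finite (vertices {x. \<forall>i\<in>I. a i \<bullet> x \<le> b i})"
    and "card (vertices {x. \<forall>i\<in>I. a i \<bullet> x \<le> b i}) \<le> card I"
proof -
  define F where "F = {x. \<forall>i\<in>I. a i \<bullet> x \<le> b i}"
  have key: "card V \<le> card I" if V: "finite V" "V \<subseteq> vertices F" for V
  proof -
    have "(\<Sum>v\<in>V. card {i\<in>I. a i \<bullet> v = b i}) = (\<Sum>v\<in>V. \<Sum>i\<in>I. if a i \<bullet> v = b i then 1 else 0)"
      using fin by (simp add: sum.If_cases Int_def)
    also have "\<dots> = (\<Sum>i\<in>I. \<Sum>v\<in>V. if a i \<bullet> v = b i then 1 else 0)"
      by (rule sum.swap)
    also have "\<dots> = (\<Sum>i\<in>I. card {v\<in>V. a i \<bullet> v = b i})"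
      using V by (simp add: sum.If_cases Int_def)
    also have "\<dots> \<le> (\<Sum>i\<in>I. 2)"
    proof (rule sum_mono)
      fix i assume i: "i \<in> I"
      show "card {v\<in>V. a i \<bullet> v = b i} \<le> 2"
      proof (rule card_le2)
        show "finite {v\<in>V. a i \<bullet> v = b i}" using V by simp
      next
        fix x y z assume xyz: "x \<in> {v\<in>V. a i \<bullet> v = b i}" "y \<in> {v\<in>V. a i \<bullet> v = b i}"
          "z \<in> {v\<in>V. a i \<bullet> v = b i}" "x \<noteq> y" "y \<noteq> z" "x \<noteq> z"
        have "x extreme_point_of F" "y extreme_point_of F" "z extreme_point_of F"
          using xyz(1-3) V(2) unfolding vertices_def by auto
        thus False by (rule three_on_line[OF a0[OF i]]) (use xyz in auto)
      qed
    qed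
    finally have A: "(\<Sum>v\<in>V. card {i\<in>I. a i \<bullet> v = b i}) \<le> 2 * card I" by simp
    have "(\<Sum>v\<in>V. 2) \<le> (\<Sum>v\<in>V. card {i\<in>I. a i \<bullet> v = b i})"
      by (rule sum_mono) (use V tight2[OF fin] in \<open>auto simp: vertices_def F_def\<close>)
    with A show ?thesis by simp
  qed
  show fV: "finite (vertices F)"
  proof (rule ccontr)
    assume "infinite (vertices F)"
    then obtain V where "finite V" "card V = Suc (card I)" "V \<subseteq> vertices F"
      using infinite_arbitrarily_large by blast
    thus False using key by fastforce
  qed
  show "card (vertices F) \<le> card I" using key[OF fV] by simp
qed


primrec qlist :: "(pt \<Rightarrow> answer) \<Rightarrow> alg \<Rightarrow> pt list" where
  "qlist orc (Done S) = []"
| "qlist orc (Ask q k) = q # qlist orc (k (orc q))"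

lemma length_qlist: "length (qlist orc A) = num_queries orc A"
  by (induction A) auto

lemma result_agree:
  "(\<forall>q\<in>set (qlist orc A). orc' q = orc q) \<Longrightarrow> result orc' A = result orc A"
  by (induction A) auto

definition valid :: "pt set \<Rightarrow> pt \<Rightarrow> answer \<Rightarrow> bool" where
  "valid C q ans \<longleftrightarrow> (q \<in> C \<longrightarrow> ans = Inside) \<and>
          (q \<notin> C \<longrightarrow> (\<exists>a b. ans = Separate a b \<and> a \<noteq> 0 \<and>
                               C \<subseteq> {x. a \<bullet> x \<le> b} \<and> a \<bullet> q > b))"

lemma sep_oracle_valid: "sep_oracle C orc \<longleftrightarrow> (\<forall>q. valid C q (orc q))"
  by (simp add: sep_oracle_def valid_def)

lemma valid_exists:
  assumes "convex C" "closed C" "C \<noteq> {}"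
  shows "\<exists>ans. valid C q ans"
proof (cases "q \<in> C")
  case True thus ?thesis by (auto simp: valid_def)
next
  case False
  then obtain a b where ab: "a \<bullet> q < b" "\<forall>x\<in>C. a \<bullet> x > b"
    using separating_hyperplane_closed_point[OF assms(1,2)] by blast
  from assms(3) obtain y where "y \<in> C" by auto
  have "a \<noteq> 0" using ab \<open>y \<in> C\<close> by auto
  hence "valid C q (Separate (-a) (-b))"
    using False ab by (auto simp: valid_def less_imp_le)
  thus ?thesis by blast
qed

lemma consistent:
  assumes cl: "classifies P A" and so: "sep_oracle C orc"
    and cb: "convex_body C" and cb': "convex_body C'"
    and val: "\<forall>q\<in>set (qlist orc A). valid C' q (orc q)"
  shows "C' \<inter> P = C \<inter> P"
proof -
  define orc' where "orc' q = (if valid C' q (orc q) then orc q else (SOME ans. valid C' q ans))" for q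
  have ne: "C' \<noteq> {}" using cb' interior_subset[of C'] by (auto simp: convex_body_def)
  have "valid C' q (orc' q)" for q
    using valid_exists[of C' q] cb' ne someI_ex[of "valid C' q"]
    by (auto simp: orc'_def convex_body_def compact_imp_closed)
  hence so': "sep_oracle C' orc'" by (simp add: sep_oracle_valid)
  have "result orc' A = result orc A"
    by (rule result_agree) (use val in \<open>simp add: orc'_def\<close>)
  moreover have "\<forall>p\<in>P. p \<in> result orc' A \<longleftrightarrow> p \<in> C'"
    using cl cb' so' by (simp add: classifies_def)
  moreover have "\<forall>p\<in>P. p \<in> result orc A \<longleftrightarrow> p \<in> C"
    using cl cb so by (simp add: classifies_def)
  ultimately show ?thesis by auto
qed

lemma inside_in:
  assumes "sep_oracle C orc" "orc q = Inside" shows "q \<in> C"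
  using assms unfolding sep_oracle_def by (metis answer.distinct(1))

lemma valid_sub:
  assumes "sep_oracle C orc" "orc q \<noteq> Inside" "C' \<subseteq> C"
  shows "valid C' q (orc q)"
proof -
  have "q \<notin> C" using assms(1,2) by (auto simp: sep_oracle_def)
  then obtain a b where "orc q = Separate a b" "a \<noteq> 0" "C \<subseteq> {x. a \<bullet> x \<le> b}" "a \<bullet> q > b"
    using assms(1) unfolding sep_oracle_def by blast
  thus ?thesis using assms(3) by (auto simp: valid_def)
qed


lemma inner_bound:
  assumes cl: "classifies P A" and so: "sep_oracle C orc" and cb: "convex_body C"
  shows "inner_fence_size P C \<le> card (set (filter (\<lambda>q. orc q = Inside) (qlist orc A)))"
proof -
  define Q where "Q = set (filter (\<lambda>q. orc q = Inside) (qlist orc A))"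
  have fQ: "finite Q" by (simp add: Q_def)
  have QC: "Q \<subseteq> C" using inside_in[OF so] by (auto simp: Q_def)
  have cvC: "convex C" and cpC: "compact C" and intC: "interior C \<noteq> {}"
    using cb by (auto simp: convex_body_def)
  have HC: "convex hull Q \<subseteq> C" using QC cvC by (rule hull_minimal)
  have vQ: "card (vertices (convex hull Q)) \<le> card Q"
    by (rule card_mono[OF fQ]) (auto simp: vertices_def dest: extreme_point_of_convex_hull)
  show ?thesis
  proof (cases "C \<inter> P = convex hull Q \<inter> P")
    case True
    have "inner_fence_size P C \<le> card (vertices (convex hull Q))"
      unfolding inner_fence_size_def
      by (rule Least_le) (use True HC polyhedron_convex_hull[OF fQ] in blast)
    thus ?thesis using vQ by (simp add: Q_def)
  next
    case False
    then obtain p where p: "p \<in> C" "p \<in> P" "p \<notin> convex hull Q" using HC by blast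
    obtain S where S: "compact S" "convex S" "S \<noteq> {}" "S \<subseteq> C" "convex hull Q \<subseteq> S" "p \<notin> S"
    proof (cases "Q = {}")
      case False
      show ?thesis
        by (rule that[of "convex hull Q"])
           (use False HC p fQ in \<open>auto simp: compact_convex_hull finite_imp_compact\<close>)
    next
      case True
      have "interior C \<noteq> {p}" using not_open_singleton[of p] by (metis open_interior)
      then obtain c where c: "c \<in> interior C" "c \<noteq> p" using intC by blast
      show ?thesis
        by (rule that[of "{c}"]) (use True c interior_subset[of C] in auto)
    qed
    obtain a b where ab: "a \<bullet> p < b" "\<forall>x\<in>S. a \<bullet> x > b"
      using separating_hyperplane_closed_point[OF S(2) compact_imp_closed[OF S(1)] S(6)] by blast
    define C' where "C' = C \<inter> {x. b \<le> a \<bullet> x}"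
    have SC': "S \<subseteq> C'" using S(4) ab(2) by (auto simp: C'_def less_imp_le)
    obtain s where s: "s \<in> S" using S(3) by blast
    obtain c where c: "c \<in> interior C" using intC by blast
    obtain y where y: "y \<in> interior C" "a \<bullet> y > b"
    proof (cases "a \<bullet> c > b")
      case True thus ?thesis using that c by blast
    next
      case False
      define e where "e = (a \<bullet> s - b) / (2 * (a \<bullet> s - a \<bullet> c))"
      have sb: "a \<bullet> s > b" using ab(2) s by blast
      have e0: "0 < e" "e \<le> 1" using sb False by (auto simp: e_def field_simps)
      have "s - e *\<^sub>R (s - c) \<in> interior C"
        by (rule mem_interior_convex_shrink[OF cvC c _ e0]) (use s S(4) in auto)
      have h1: "a \<bullet> (s - e *\<^sub>R (s - c)) = a \<bullet> s - e * (a \<bullet> s - a \<bullet> c)"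
        by (simp add: inner_diff_right algebra_simps)
      have h2: "e * (a \<bullet> s - a \<bullet> c) = (a \<bullet> s - b) / 2"
        using sb False by (simp add: e_def field_simps)
      have "a \<bullet> (s - e *\<^sub>R (s - c)) = a \<bullet> s - (a \<bullet> s - b) / 2"
        unfolding h1 h2 ..
      also have "\<dots> = (a \<bullet> s + b) / 2" by (simp add: field_simps)
      finally have "a \<bullet> (s - e *\<^sub>R (s - c)) = (a \<bullet> s + b) / 2" .
      moreover note \<open>s - e *\<^sub>R (s - c) \<in> interior C\<close>
      ultimately show ?thesis using that sb by auto
    qed
    have "interior C \<inter> {x. b < a \<bullet> x} \<subseteq> interior C'"
      by (rule interior_maximal) (auto simp: C'_def open_halfspace_gt intro: open_Int dest: interior_subset[THEN subsetD])
    hence intC': "interior C' \<noteq> {}" using y by blast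
    have cb': "convex_body C'"
      using cpC cvC intC' by (auto simp: convex_body_def C'_def intro!: compact_Int_closed closed_halfspace_ge convex_Int convex_halfspace_ge)
    have "\<forall>q\<in>set (qlist orc A). valid C' q (orc q)"
    proof
      fix q assume q: "q \<in> set (qlist orc A)"
      show "valid C' q (orc q)"
      proof (cases "orc q = Inside")
        case True
        hence "q \<in> Q" using q by (simp add: Q_def)
        hence "q \<in> C'" using SC' S(5) hull_subset[of Q convex] by blast
        thus ?thesis using True by (simp add: valid_def)
      next
        case False
        thus ?thesis by (rule valid_sub[OF so]) (auto simp: C'_def)
      qed
    qed
    hence "C' \<inter> P = C \<inter> P" by (rule consistent[OF cl so cb cb'])
    moreover have "p \<notin> C'" using ab(1) by (simp add: C'_def)
    ultimately show ?thesis using p by blast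
  qed
qed


lemma outer_bound:
  assumes cl: "classifies P A" and so: "sep_oracle C orc" and cb: "convex_body C"
  shows "outer_fence_size P C \<le> card (set (filter (\<lambda>q. orc q \<noteq> Inside) (qlist orc A)))"
proof -
  define Q where "Q = set (filter (\<lambda>q. orc q \<noteq> Inside) (qlist orc A))"
  define a where "a q = (case orc q of Separate a b \<Rightarrow> a | Inside \<Rightarrow> 0)" for q
  define b where "b q = (case orc q of Separate a b \<Rightarrow> b | Inside \<Rightarrow> 0)" for q
  have fQ: "finite Q" by (simp add: Q_def)
  have Qprop: "a q \<noteq> 0 \<and> C \<subseteq> {x. a q \<bullet> x \<le> b q} \<and> a q \<bullet> q > b q" if "q \<in> Q" for q
  proof -
    have "orc q \<noteq> Inside" using that by (simp add: Q_def)
    hence "q \<notin> C" using so by (auto simp: sep_oracle_def)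
    then obtain a' b' where "orc q = Separate a' b'" "a' \<noteq> 0" "C \<subseteq> {x. a' \<bullet> x \<le> b'}" "a' \<bullet> q > b'"
      using so unfolding sep_oracle_def by blast
    thus ?thesis by (simp add: a_def b_def)
  qed
  define F where "F = {x. \<forall>q\<in>Q. a q \<bullet> x \<le> b q}"
  have FI: "F = \<Inter> ((\<lambda>q. {x. a q \<bullet> x \<le> b q}) ` Q)" by (auto simp: F_def)
  have polyF: "polyhedron F" unfolding FI
    by (rule polyhedron_Inter) (use fQ polyhedron_halfspace_le in auto)
  have CF: "C \<subseteq> F" using Qprop by (auto simp: F_def)
  have cvC: "convex C" and cpC: "compact C" and intC: "interior C \<noteq> {}"
    using cb by (auto simp: convex_body_def)
  show ?thesis
  proof (cases "C \<inter> P = F \<inter> P")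
    case True
    have "outer_fence_size P C \<le> card (vertices F)"
      unfolding outer_fence_size_def
      by (rule Least_le) (use True CF polyF in blast)
    also have "\<dots> \<le> card Q"
      unfolding F_def by (rule vertex_bound(2)[OF fQ]) (use Qprop in blast)
    finally show ?thesis by (simp add: Q_def)
  next
    case False
    then obtain p where p: "p \<in> F" "p \<in> P" "p \<notin> C" using CF by blast
    define C' where "C' = convex hull (insert p C)"
    have CC': "C \<subseteq> C'" using hull_subset[of "insert p C" convex] by (auto simp: C'_def)
    have cvF: "convex F" by (rule polyhedron_imp_convex[OF polyF])
    have C'F: "C' \<subseteq> F" unfolding C'_def
      using CF p(1) cvF by (intro hull_minimal) auto
    have cb': "convex_body C'"
      unfolding convex_body_def
    proof (intro conjI)
      show "compact C'" unfolding C'_def by (intro compact_convex_hull compact_insert cpC)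
      show "convex C'" unfolding C'_def by simp
      show "interior C' \<noteq> {}" using interior_mono[OF CC'] intC by blast
    qed
    have "\<forall>q\<in>set (qlist orc A). valid C' q (orc q)"
    proof
      fix q assume q: "q \<in> set (qlist orc A)"
      show "valid C' q (orc q)"
      proof (cases "orc q = Inside")
        case True
        hence "q \<in> C'" using inside_in[OF so] CC' by blast
        thus ?thesis using True by (simp add: valid_def)
      next
        case False
        hence qQ: "q \<in> Q" using q by (simp add: Q_def)
        have "orc q = Separate (a q) (b q)" using False by (cases "orc q") (auto simp: a_def b_def)
        moreover have "C' \<subseteq> {x. a q \<bullet> x \<le> b q}" using C'F qQ by (auto simp: F_def)
        moreover have "q \<notin> C'" using calculation(2) Qprop[OF qQ] by auto
        ultimately show ?thesis using Qprop[OF qQ] by (auto simp: valid_def)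
      qed
    qed
    hence "C' \<inter> P = C \<inter> P" by (rule consistent[OF cl so cb cb'])
    moreover have "p \<in> C'" using hull_subset[of "insert p C" convex] by (auto simp: C'_def)
    ultimately show ?thesis using p by blast
  qed
qed

theorem lemma3p1:
  fixes P C :: "pt set" and A :: alg and orc :: "pt \<Rightarrow> answer"
  assumes "finite P" and "convex_body C"
    and "classifies P A"
    and "sep_oracle C orc"
  shows "price P C \<le> num_queries orc A"
proof -
  have "price P C \<le> card (set (filter (\<lambda>q. orc q = Inside) (qlist orc A)))
                    + card (set (filter (\<lambda>q. orc q \<noteq> Inside) (qlist orc A)))"
    unfolding price_def using inner_bound[OF assms(3,4,2)] outer_bound[OF assms(3,4,2)] by linarith
  also have "\<dots> \<le> length (filter (\<lambda>q. orc q = Inside) (qlist orc A))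
                    + length (filter (\<lambda>q. \<not> orc q = Inside) (qlist orc A))"
    by (intro add_mono card_length)
  also have "\<dots> = num_queries orc A" by (simp add: sum_length_filter_compl length_qlist)
  finally show ?thesis .
qed


end
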